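(* Let $1<d_1<d_2$, let $\tilde{\mathbb{R}}=(-\infty,-1]\cup[1,\infty)$ be equipped with the measure $d\mu(r)=|r|^{d_1-1}dr$ for $r\le-1$ and $d\mu(r)=r^{d_2-1}dr$ for $r\ge1$, let $d_*=d_1\wedge d_2$, and let $S_0(\tilde{\mathbb{R}})=\{f\in C_c^\infty(\tilde{\mathbb{R}}):f(-1)=f(1)=0\}$. Then for every $1\le p<d_*$ there is $C>0$ such that $$\int_{\tilde{\mathbb{R}}}\frac{|f(x)|^p}{|x|^p}\,d\mu(x)\le C\int_{\tilde{\mathbb{R}}}|f'(x)|^p\,d\mu(x)\qquad\forall f\in S_0(\tilde{\mathbb{R}}).$$
   Context: $C_c^\infty(\tilde{\mathbb{R}})$ denotes compactly supported functions that are smooth on each of the half-lines $(-\infty,-1]$ and $[1,\infty)$; $a\wedge b=\min(a,b)$. *)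

theory Defs
  imports "HOL-Analysis.Analysis"
begin

definition deriv_family_on :: "real set \<Rightarrow> (nat \<Rightarrow> real \<Rightarrow> real) \<Rightarrow> (real \<Rightarrow> real) \<Rightarrow> bool" where
  "deriv_family_on S D f \<longleftrightarrow>
     (\<forall>x\<in>S. D 0 x = f x) \<and>
     (\<forall>n. \<forall>x\<in>S. (D n has_real_derivative D (Suc n) x) (at x within S))"

definition smooth_on :: "real set \<Rightarrow> (real \<Rightarrow> real) \<Rightarrow> bool" where
  "smooth_on S f \<longleftrightarrow> (\<exists>D. deriv_family_on S D f)"

(* S_0(R~): compactly supported on R~ = (-\<infinity>,-1] \<union> [1,\<infinity>), smooth on each closed
   half-line, vanishing at -1 and 1.  Values of f outside R~ are irrelevant. *)
definition S0_tilde :: "(real \<Rightarrow> real) set" where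
  "S0_tilde = {f. smooth_on {..-1} f \<and> smooth_on {1..} f \<and>
                  (\<exists>R. \<forall>x. \<bar>x\<bar> \<ge> R \<longrightarrow> f x = 0) \<and> f (-1) = 0 \<and> f 1 = 0}"

definition tderiv :: "(real \<Rightarrow> real) \<Rightarrow> real \<Rightarrow> real" where
  "tderiv f x = (if x \<le> -1 then (THE y. (f has_real_derivative y) (at x within {..-1}))
                 else (THE y. (f has_real_derivative y) (at x within {1..})))"

definition tint :: "real \<Rightarrow> real \<Rightarrow> (real \<Rightarrow> real) \<Rightarrow> real" where
  "tint d1 d2 g = (LINT r:{..-1}|lborel. g r * \<bar>r\<bar> powr (d1 - 1))
                + (LINT r:{1..}|lborel. g r * r powr (d2 - 1))"

end

theory Submission imports Defs begin

lemma young_pt: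
  fixes p a :: real
  assumes p1: "1 \<le> p" and a0: "0 < a"
  shows "\<exists>c1 c2. 0 \<le> c1 \<and> c1 * (p/a) \<le> 1/2 \<and> 0 < c2 \<and>
     (\<forall>X\<ge>0. \<forall>Y\<ge>0. X powr (p-1) * Y \<le> c1 * X powr p + c2 * Y powr p)"
proof (cases "p = 1")
  case True
  show ?thesis
  proof (intro exI conjI allI impI)
    fix X Y :: real assume "0 \<le> X" "0 \<le> Y"
    then show "X powr (p-1) * Y \<le> 0 * X powr p + 1 * Y powr p"
      using True by (auto simp: powr_0)
  qed auto
next
  case False
  then have p: "p > 1" using p1 by auto
  define q where "q = p/(p-1)"
  have q: "q > 1" "1/p + 1/q = 1" using p by (auto simp: q_def field_simps)
  define t where "t = (a*q/(2*p)) powr (1/q)"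
  have t0: "t > 0" using a0 q p by (auto simp: t_def)
  have tq: "t powr q = a*q/(2*p)" using a0 q p by (simp add: t_def powr_powr)
  show ?thesis
  proof (intro exI conjI allI impI)
    show "0 \<le> t powr q / q" using q by simp
    show "t powr q / q * (p/a) \<le> 1/2" using tq q p a0 by (simp add: field_simps)
    show "0 < t powr (-p) / p" using p t0 by simp
    fix X Y :: real assume X: "0 \<le> X" and Y: "0 \<le> Y"
    have "X powr (p-1) * Y = (t * X powr (p-1)) * (Y / t)" using t0 by simp
    also have "\<dots> \<le> (t * X powr (p-1)) powr q / q + (Y/t) powr p / p"
      using Youngs_inequality[of q p "t * X powr (p-1)" "Y/t"] q p t0 X Y
      by (simp add: add.commute)
    also have "(t * X powr (p-1)) powr q = t powr q * X powr p"
      using t0 X p q by (simp add: powr_mult powr_powr q_def)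
    also have "(Y/t) powr p = t powr (-p) * Y powr p"
      using t0 Y by (simp add: powr_divide powr_minus_divide)
    finally show "X powr (p-1) * Y \<le> t powr q / q * X powr p + t powr (- p) / p * Y powr p"
      by simp
  qed
qed

lemma weight_id:
  fixes G h r d p :: real
  assumes "0 \<le> G" "0 \<le> h" "0 < r" "1 \<le> p"
  shows "(G * r powr ((d-p-1)/p)) powr (p-1) * (h * r powr ((d-1)/p)) = G powr (p-1) * h * r powr (d-p)"
    and "(G * r powr ((d-p-1)/p)) powr p = G powr p * r powr (d-p-1)"
    and "(h * r powr ((d-1)/p)) powr p = h powr p * r powr (d-1)"
proof -
  have e: "(d - 1) / p + (p - 1) * (d - p - 1) / p = d-p" using assms by (simp add: field_simps)
  show "(G * r powr ((d-p-1)/p)) powr (p-1) * (h * r powr ((d-1)/p)) = G powr (p-1) * h * r powr (d-p)"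
    using assms by (simp add: powr_mult powr_powr powr_add[symmetric] e mult_ac)
  show "(G * r powr ((d-p-1)/p)) powr p = G powr p * r powr (d-p-1)"
    using assms by (simp add: powr_mult powr_powr)
  show "(h * r powr ((d-1)/p)) powr p = h powr p * r powr (d-1)"
    using assms by (simp add: powr_mult powr_powr)
qed

lemma core_eps:
  fixes d p R \<epsilon> c1 c2 :: real and h :: "real \<Rightarrow> real"
  assumes dp: "p < d" and p1: "1 \<le> p" and R1: "1 \<le> R" and e0: "0 < \<epsilon>"
    and hc: "continuous_on {1..R} h" and h0: "\<forall>x\<in>{1..R}. 0 \<le> h x"
    and c1: "0 \<le> c1" "c1 * (p/(d-p)) \<le> 1/2" and c2: "0 < c2"
    and Y: "\<forall>X\<ge>0. \<forall>Y\<ge>0. X powr (p-1) * Y \<le> c1 * X powr p + c2 * Y powr p"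
  defines "G \<equiv> (\<lambda>r. integral {1..R} h - integral {1..r} h + \<epsilon>)"
  shows "integral {1..R} (\<lambda>r. G r powr p * r powr (d-p-1))
           \<le> 2 * (\<epsilon> powr p * R powr (d-p) / (d-p)) + 2 * (p/(d-p)) * c2 * integral {1..R} (\<lambda>r. h r powr p * r powr (d-1))"
proof -
  define a where "a = d - p"
  have a0: "a > 0" using dp by (simp add: a_def)
  have hint: "h integrable_on {1..R}" using hc by (rule integrable_continuous_interval)
  have Geq: "G r = integral {r..R} h + \<epsilon>" if "r \<in> {1..R}" for r
  proof -
    have "integral {1..r} h + integral {r..R} h = integral {1..R} h"
      using Henstock_Kurzweil_Integration.integral_combine[where a=1 and c=r and b=R and f=h] that hint by auto
    then show ?thesis unfolding G_def by simp
  qed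
  have Gpos: "G r \<ge> \<epsilon>" if "r \<in> {1..R}" for r
  proof -
    have "h integrable_on {r..R}" using integrable_subinterval_real[OF hint, of r R] that by auto
    then have "integral {r..R} h \<ge> 0" using h0 that by (intro integral_nonneg) auto
    then show ?thesis using Geq[OF that] by simp
  qed
  have Gd: "(G has_real_derivative - h r) (at r within {1..R})" if "r \<in> {1..R}" for r
  proof -
    have "((\<lambda>u. integral {1..u} h) has_real_derivative h r) (at r within {1..R})"
      using integral_has_vector_derivative[OF hc that] by (simp add: has_real_derivative_iff_has_vector_derivative)
    then show ?thesis unfolding G_def by (auto intro!: derivative_eq_intros)
  qed
  have Gc: "continuous_on {1..R} G" using Gd by (rule DERIV_continuous_on)
  define F where "F r = G r powr p * r powr a / a" for r
  define F' where "F' r = - (p/a) * (G r powr (p-1) * h r * r powr a) + G r powr p * r powr (a-1)" for r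
  have Fd: "(F has_real_derivative F' r) (at r within {1..R})" if r: "r \<in> {1..R}" for r
  proof -
    have g0: "G r > 0" using Gpos[OF r] e0 by linarith
    have r0: "r > 0" using r by auto
    have d1: "((\<lambda>r. G r powr p) has_real_derivative p * G r powr (p-1) * (- h r)) (at r within {1..R})"
      using DERIV_chain2[OF has_real_derivative_powr[OF g0] Gd[OF r]] by simp
    have d2: "((\<lambda>r. r powr a) has_real_derivative a * r powr (a-1)) (at r within {1..R})"
      using has_real_derivative_powr[OF r0] by (rule has_field_derivative_at_within)
    have "((\<lambda>r. G r powr p * r powr a / a) has_real_derivative
       (p * G r powr (p-1) * (- h r) * r powr a + a * r powr (a-1) * G r powr p) / a) (at r within {1..R})"
      using DERIV_cdivide[OF DERIV_mult[OF d1 d2], of a] by simp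
    moreover have "(p * G r powr (p-1) * (- h r) * r powr a + a * r powr (a-1) * G r powr p) / a = F' r"
      using a0 by (simp add: F'_def field_simps)
    ultimately show ?thesis unfolding F_def by simp
  qed
  have FTC: "(F' has_integral (F R - F 1)) {1..R}"
    using R1 Fd by (intro fundamental_theorem_of_calculus) (auto simp: has_real_derivative_iff_has_vector_derivative[symmetric])
  have cT1: "continuous_on {1..R} (\<lambda>r. G r powr p * r powr (a-1))"
    using Gpos e0 by (intro continuous_intros Gc) (auto, smt (verit))
  have cT2: "continuous_on {1..R} (\<lambda>r. G r powr (p-1) * h r * r powr a)"
    using Gpos e0 by (intro continuous_intros Gc hc) (auto, smt (verit))
  have cJ: "continuous_on {1..R} (\<lambda>r. h r powr p * r powr (d-1))"
  proof -
    have "continuous_on {1..R} (\<lambda>r. h r powr p)"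
      by (rule continuous_on_powr'[OF hc continuous_on_const]) (use h0 p1 in auto)
    moreover have "continuous_on {1..R} (\<lambda>r::real. r powr (d-1))"
      by (intro continuous_intros) auto
    ultimately show ?thesis by (rule continuous_on_mult)
  qed
  define T1 where "T1 = integral {1..R} (\<lambda>r. G r powr p * r powr (a-1))"
  define T2 where "T2 = integral {1..R} (\<lambda>r. G r powr (p-1) * h r * r powr a)"
  define J where "J = integral {1..R} (\<lambda>r. h r powr p * r powr (d-1))"
  have i1: "(\<lambda>r. G r powr p * r powr (a-1)) integrable_on {1..R}" using cT1 by (rule integrable_continuous_interval)
  have i2: "(\<lambda>r. G r powr (p-1) * h r * r powr a) integrable_on {1..R}" using cT2 by (rule integrable_continuous_interval)
  have iJ: "(\<lambda>r. h r powr p * r powr (d-1)) integrable_on {1..R}" using cJ by (rule integrable_continuous_interval)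
  have "integral {1..R} F' = - (p/a) * T2 + T1"
  proof -
    have i2': "(\<lambda>r. - (p/a) * (G r powr (p-1) * h r * r powr a)) integrable_on {1..R}"
      using integrable_cmul[OF i2, of "- (p/a)"] by simp
    have "integral {1..R} F' = integral {1..R} (\<lambda>r. - (p/a) * (G r powr (p-1) * h r * r powr a)) + T1"
      unfolding F'_def T1_def by (rule integral_add[OF i2' i1])
    also have "integral {1..R} (\<lambda>r. - (p/a) * (G r powr (p-1) * h r * r powr a)) = - (p/a) * T2"
      unfolding T2_def using integral_mult[OF i2, of "- (p/a)"] by simp
    finally show ?thesis .
  qed
  moreover have "integral {1..R} F' = F R - F 1" using FTC by (rule integral_unique)
  ultimately have T1eq: "T1 = F R - F 1 + (p/a) * T2" by simp
  have FR: "F R = \<epsilon> powr p * R powr a / a"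
    using R1 unfolding F_def G_def by simp
  have F1: "F 1 \<ge> 0" unfolding F_def using a0 by simp
  have T2le: "T2 \<le> c1 * T1 + c2 * J"
  proof -
    have "T2 \<le> integral {1..R} (\<lambda>r. c1 * (G r powr p * r powr (a-1)) + c2 * (h r powr p * r powr (d-1)))"
      unfolding T2_def
    proof (rule integral_le[OF i2])
      show "(\<lambda>r. c1 * (G r powr p * r powr (a-1)) + c2 * (h r powr p * r powr (d-1))) integrable_on {1..R}"
        using integrable_add[OF integrable_cmul[OF i1, of c1] integrable_cmul[OF iJ, of c2]] by simp
      fix r assume r: "r \<in> {1..R}"
      have g0: "G r \<ge> 0" using Gpos[OF r] e0 by linarith
      have hr: "h r \<ge> 0" using h0 r by auto
      have r0: "r > 0" using r by auto
      have "G r powr (p-1) * h r * r powr a = (G r * r powr ((d-p-1)/p)) powr (p-1) * (h r * r powr ((d-1)/p))"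
        unfolding a_def by (rule weight_id(1)[OF g0 hr r0 p1, symmetric])
      also have "\<dots> \<le> c1 * (G r * r powr ((d-p-1)/p)) powr p + c2 * (h r * r powr ((d-1)/p)) powr p"
        using Y[rule_format, of "G r * r powr ((d-p-1)/p)" "h r * r powr ((d-1)/p)"] g0 hr r0 by simp
      also have "\<dots> = c1 * (G r powr p * r powr (a-1)) + c2 * (h r powr p * r powr (d-1))"
        using weight_id(2,3)[OF g0 hr r0 p1, of d] by (simp add: a_def)
      finally show "G r powr (p-1) * h r * r powr a \<le> c1 * (G r powr p * r powr (a-1)) + c2 * (h r powr p * r powr (d-1))" .
    qed
    also have "\<dots> = c1 * T1 + c2 * J"
    proof -
      have a1: "(\<lambda>r. c1 * (G r powr p * r powr (a-1))) integrable_on {1..R}"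
        using integrable_cmul[OF i1, of c1] by simp
      have a2: "(\<lambda>r. c2 * (h r powr p * r powr (d-1))) integrable_on {1..R}"
        using integrable_cmul[OF iJ, of c2] by simp
      show ?thesis
      proof -
        have e1: "integral {1..R} (\<lambda>r. c1 * (G r powr p * r powr (a-1))) = c1 * T1"
          unfolding T1_def by (rule integral_mult[OF i1, symmetric])
        have e2: "integral {1..R} (\<lambda>r. c2 * (h r powr p * r powr (d-1))) = c2 * J"
          unfolding J_def by (rule integral_mult[OF iJ, symmetric])
        show ?thesis using integral_add[OF a1 a2] e1 e2 by linarith
      qed
    qed
    finally show ?thesis .
  qed
  have pa: "p/a > 0" using a0 p1 by simp
  have "T1 \<le> \<epsilon> powr p * R powr a / a + (p/a) * (c1 * T1 + c2 * J)"
    using T1eq FR F1 T2le pa by (smt (verit) mult_left_mono)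
  moreover have "(p/a) * (c1 * T1 + c2 * J) = (c1 * (p/a)) * T1 + (p/a) * c2 * J"
    by (simp add: distrib_left mult.assoc mult.left_commute)
  moreover have T1n: "T1 \<ge> 0" unfolding T1_def
    by (rule integral_nonneg[OF i1]) simp
  moreover have "(c1 * (p/a)) * T1 \<le> (1/2) * T1"
    using mult_right_mono[OF c1(2) T1n] unfolding a_def by simp
  ultimately have "T1 \<le> 2 * (\<epsilon> powr p * R powr a / a) + 2 * (p/a) * c2 * J" by linarith
  then show ?thesis unfolding T1_def J_def a_def by simp
qed

lemma eps_limit:
  fixes x y M :: real
  assumes M: "0 \<le> M" and H: "\<And>\<epsilon>. 0 < \<epsilon> \<Longrightarrow> \<epsilon> \<le> 1 \<Longrightarrow> x \<le> y + \<epsilon> * M"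
  shows "x \<le> y"
proof (rule field_le_epsilon)
  fix e :: real assume e: "0 < e"
  define \<epsilon> where "\<epsilon> = min 1 (e / (M+1))"
  have e0: "0 < \<epsilon>" "\<epsilon> \<le> 1" using e M by (auto simp: \<epsilon>_def)
  have "\<epsilon> * M \<le> e / (M+1) * M" using M by (intro mult_right_mono) (auto simp: \<epsilon>_def)
  also have "\<dots> \<le> e" using M e by (simp add: field_simps)
  finally show "x \<le> y + e" using H[OF e0] by linarith
qed

lemma core:
  fixes d p :: real
  assumes dp: "p < d" and p1: "1 \<le> p"
  shows "\<exists>K>0. \<forall>(R::real) (h::real\<Rightarrow>real) (u::real\<Rightarrow>real). 1 \<le> R \<and> continuous_on {1..R} h \<and> (\<forall>x\<in>{1..R}. 0 \<le> h x) \<and>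
            continuous_on {1..R} u \<and> (\<forall>r\<in>{1..R}. \<bar>u r\<bar> \<le> integral {r..R} h) \<longrightarrow>
            integral {1..R} (\<lambda>r. \<bar>u r\<bar> powr p * r powr (d-p-1))
              \<le> K * integral {1..R} (\<lambda>r. h r powr p * r powr (d-1))"
proof -
  have a0: "0 < d - p" using dp by simp
  obtain c1 c2 where c1: "0 \<le> c1" "c1 * (p/(d-p)) \<le> 1/2" and c2: "0 < c2"
    and Y: "\<forall>X\<ge>0. \<forall>Y\<ge>0. X powr (p-1) * Y \<le> c1 * X powr p + c2 * Y powr p"
    using young_pt[OF p1 a0] by blast
  show ?thesis
  proof (intro exI[of _ "2 * (p/(d-p)) * c2"] conjI allI impI)
    show "0 < 2 * (p/(d-p)) * c2" using a0 p1 c2 by simp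
    fix R :: real and h u :: "real \<Rightarrow> real" assume A: "1 \<le> R \<and> continuous_on {1..R} h \<and> (\<forall>x\<in>{1..R}. 0 \<le> h x) \<and>
            continuous_on {1..R} u \<and> (\<forall>r\<in>{1..R}. \<bar>u r\<bar> \<le> integral {r..R} h)"
    then have R1: "1 \<le> R" and hc: "continuous_on {1..R} h" and h0: "\<forall>x\<in>{1..R}. 0 \<le> h x"
      and uc: "continuous_on {1..R} u" and ub: "\<forall>r\<in>{1..R}. \<bar>u r\<bar> \<le> integral {r..R} h" by auto
    have hint: "h integrable_on {1..R}" using hc by (rule integrable_continuous_interval)
    have cu: "continuous_on {1..R} (\<lambda>r. \<bar>u r\<bar> powr p * r powr (d-p-1))"
    proof -
      have "continuous_on {1..R} (\<lambda>r. \<bar>u r\<bar> powr p)"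
        by (rule continuous_on_powr'[OF continuous_on_rabs[OF uc] continuous_on_const]) (use p1 in auto)
      moreover have "continuous_on {1..R} (\<lambda>r::real. r powr (d-p-1))"
        by (intro continuous_intros) auto
      ultimately show ?thesis by (rule continuous_on_mult)
    qed
    have iu: "(\<lambda>r. \<bar>u r\<bar> powr p * r powr (d-p-1)) integrable_on {1..R}"
      using cu by (rule integrable_continuous_interval)
    define J where "J = integral {1..R} (\<lambda>r. h r powr p * r powr (d-1))"
    define M where "M = 2 * (R powr (d-p) / (d-p))"
    have M0: "0 \<le> M" using a0 by (simp add: M_def)
    show "integral {1..R} (\<lambda>r. \<bar>u r\<bar> powr p * r powr (d-p-1)) \<le> 2 * (p/(d-p)) * c2 * J"
    proof (rule eps_limit[OF M0])
      fix \<epsilon> :: real assume e0: "0 < \<epsilon>" and e1: "\<epsilon> \<le> 1"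
      define G where "G \<equiv> (\<lambda>r. integral {1..R} h - integral {1..r} h + \<epsilon>)"
      have main: "integral {1..R} (\<lambda>r. G r powr p * r powr (d-p-1))
           \<le> 2 * (\<epsilon> powr p * R powr (d-p) / (d-p)) + 2 * (p/(d-p)) * c2 * J"
        unfolding G_def J_def using core_eps[OF dp p1 R1 e0 hc h0 c1 c2 Y] .
      have Gge: "\<bar>u r\<bar> + \<epsilon> \<le> G r" if r: "r \<in> {1..R}" for r
      proof -
        have "integral {1..r} h + integral {r..R} h = integral {1..R} h"
          using Henstock_Kurzweil_Integration.integral_combine[where a=1 and c=r and b=R and f=h] r hint by auto
        then have "G r = integral {r..R} h + \<epsilon>" unfolding G_def by linarith
        moreover have "\<bar>u r\<bar> \<le> integral {r..R} h" using ub r by blast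
        ultimately show ?thesis by linarith
      qed
      have cG: "continuous_on {1..R} (\<lambda>r. G r powr p * r powr (d-p-1))"
      proof -
        have "continuous_on {1..R} (\<lambda>r. integral {1..r} h)"
          using indefinite_integral_continuous_1[OF hint] .
        then have "continuous_on {1..R} G" unfolding G_def by (intro continuous_intros)
        moreover have "\<forall>r\<in>{1..R}. G r \<noteq> 0"
        proof
          fix r assume "r \<in> {1..R}"
          from Gge[OF this] e0 show "G r \<noteq> 0" by linarith
        qed
        ultimately show ?thesis by (intro continuous_intros) auto
      qed
      have "integral {1..R} (\<lambda>r. \<bar>u r\<bar> powr p * r powr (d-p-1))
            \<le> integral {1..R} (\<lambda>r. G r powr p * r powr (d-p-1))"
      proof (rule integral_le[OF iu integrable_continuous_interval[OF cG]])
        fix r assume r: "r \<in> {1..R}"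
        have "\<bar>u r\<bar> powr p \<le> G r powr p" using Gge[OF r] p1 e0 by (intro powr_mono2) auto
        then show "\<bar>u r\<bar> powr p * r powr (d-p-1) \<le> G r powr p * r powr (d-p-1)"
          by (rule mult_right_mono) simp
      qed
      also note main
      also have "\<epsilon> powr p \<le> \<epsilon> powr 1" using e0 e1 p1 by (intro powr_mono') auto
      then have "2 * (\<epsilon> powr p * R powr (d-p) / (d-p)) \<le> \<epsilon> * M"
        using a0 e0 by (simp add: M_def divide_right_mono mult_right_mono)
      finally show "integral {1..R} (\<lambda>r. \<bar>u r\<bar> powr p * r powr (d-p-1)) \<le> 2 * (p/(d-p)) * c2 * J + \<epsilon> * M"
        by linarith
    qed
  qed
qed

lemma lint_to_integral:
  fixes \<phi> :: "real \<Rightarrow> real" and R :: real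
  assumes R1: "1 \<le> R" and c: "continuous_on {1..R} \<phi>" and z: "\<forall>x>R. \<phi> x = 0"
  shows "(LINT r:{1..}|lborel. \<phi> r) = integral {1..R} \<phi>"
proof -
  have "(LINT r:{1..}|lborel. \<phi> r) = (LINT r:{1..R}|lborel. \<phi> r)"
    unfolding set_lebesgue_integral_def
    by (rule Bochner_Integration.integral_cong) (auto simp: indicator_def z not_le)
  also have "\<dots> = integral {1..R} \<phi>"
  proof (rule set_borel_integral_eq_integral(2))
    show "set_integrable lborel {1..R} \<phi>"
      unfolding set_integrable_def using borel_integrable_compact[OF compact_Icc c] .
  qed
  finally show ?thesis .
qed

lemma halfline:
  fixes d p :: real
  assumes dp: "p < d" and p1: "1 \<le> p"
  shows "\<exists>C>0. \<forall>(f::real\<Rightarrow>real) (D1::real\<Rightarrow>real) (R::real). 1 \<le> R \<and>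
     (\<forall>x\<ge>1. (f has_real_derivative D1 x) (at x within {1..})) \<and> continuous_on {1..} D1 \<and>
     (\<forall>x\<ge>R. f x = 0) \<and> (\<forall>x>R. D1 x = 0) \<longrightarrow>
     (LINT r:{1..}|lborel. \<bar>f r\<bar> powr p / \<bar>r\<bar> powr p * r powr (d-1))
       \<le> C * (LINT r:{1..}|lborel. \<bar>D1 r\<bar> powr p * r powr (d-1))"
proof -
  obtain K where K0: "K > 0" and K: "\<forall>(R::real) (h::real\<Rightarrow>real) (u::real\<Rightarrow>real). 1 \<le> R \<and> continuous_on {1..R} h \<and> (\<forall>x\<in>{1..R}. 0 \<le> h x) \<and>
            continuous_on {1..R} u \<and> (\<forall>r\<in>{1..R}. \<bar>u r\<bar> \<le> integral {r..R} h) \<longrightarrow>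
            integral {1..R} (\<lambda>r. \<bar>u r\<bar> powr p * r powr (d-p-1))
              \<le> K * integral {1..R} (\<lambda>r. h r powr p * r powr (d-1))"
    using core[OF dp p1] by blast
  show ?thesis
  proof (intro exI[of _ K] conjI allI impI K0)
    fix f D1 :: "real \<Rightarrow> real" and R :: real
    assume A: "1 \<le> R \<and> (\<forall>x\<ge>1. (f has_real_derivative D1 x) (at x within {1..})) \<and> continuous_on {1..} D1 \<and>
     (\<forall>x\<ge>R. f x = 0) \<and> (\<forall>x>R. D1 x = 0)"
    then have R1: "1 \<le> R" and fd: "\<And>x. x \<ge> 1 \<Longrightarrow> (f has_real_derivative D1 x) (at x within {1..})"
      and Dc: "continuous_on {1..} D1" and fz: "\<And>x. x \<ge> R \<Longrightarrow> f x = 0" and Dz: "\<And>x. x > R \<Longrightarrow> D1 x = 0"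
      by auto
    have fc: "continuous_on {1..} f"
      by (rule DERIV_continuous_on[where D=D1]) (use fd in auto)
    have fcR: "continuous_on {1..R} f" using continuous_on_subset[OF fc] by auto
    have DcR: "continuous_on {1..R} D1" using continuous_on_subset[OF Dc] by auto
    have hc: "continuous_on {1..R} (\<lambda>r. \<bar>D1 r\<bar>)" using DcR by (rule continuous_on_rabs)
    have ub: "\<forall>r\<in>{1..R}. \<bar>f r\<bar> \<le> integral {r..R} (\<lambda>r. \<bar>D1 r\<bar>)"
    proof
      fix r assume r: "r \<in> {1..R}"
      have "(D1 has_integral (f R - f r)) {r..R}"
      proof (rule fundamental_theorem_of_calculus)
        show "r \<le> R" using r by auto
        fix x assume x: "x \<in> {r..R}"
        have "(f has_real_derivative D1 x) (at x within {r..R})"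
          using DERIV_subset[OF fd[of x]] x r by auto
        then show "(f has_vector_derivative D1 x) (at x within {r..R})"
          by (simp add: has_real_derivative_iff_has_vector_derivative)
      qed
      then have eq: "integral {r..R} D1 = - f r" using fz[of R] by (simp add: integral_unique)
      have c1: "continuous_on {r..R} D1" using continuous_on_subset[OF Dc] r by auto
      have "norm (integral {r..R} D1) \<le> integral {r..R} (\<lambda>r. \<bar>D1 r\<bar>)"
        by (rule Henstock_Kurzweil_Integration.integral_norm_bound_integral)
           (auto intro!: integrable_continuous_interval c1 continuous_on_rabs)
      then show "\<bar>f r\<bar> \<le> integral {r..R} (\<lambda>r. \<bar>D1 r\<bar>)" using eq by simp
    qed
    have main: "integral {1..R} (\<lambda>r. \<bar>f r\<bar> powr p * r powr (d-p-1))
              \<le> K * integral {1..R} (\<lambda>r. \<bar>D1 r\<bar> powr p * r powr (d-1))"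
      using K[rule_format, of R "\<lambda>r. \<bar>D1 r\<bar>" f] R1 hc fcR ub by simp
    have cfp: "continuous_on {1..R} (\<lambda>r. \<bar>f r\<bar> powr p)"
      by (rule continuous_on_powr'[OF continuous_on_rabs[OF fcR] continuous_on_const]) (use p1 in auto)
    have cDp: "continuous_on {1..R} (\<lambda>r. \<bar>D1 r\<bar> powr p)"
      by (rule continuous_on_powr'[OF hc continuous_on_const]) (use p1 in auto)
    have L: "(LINT r:{1..}|lborel. \<bar>f r\<bar> powr p / \<bar>r\<bar> powr p * r powr (d-1))
        = integral {1..R} (\<lambda>r. \<bar>f r\<bar> powr p / \<bar>r\<bar> powr p * r powr (d-1))"
    proof (rule lint_to_integral[OF R1])
      have "continuous_on {1..R} (\<lambda>r::real. \<bar>r\<bar> powr p)" by (intro continuous_intros) auto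
      moreover have "continuous_on {1..R} (\<lambda>r::real. r powr (d-1))" by (intro continuous_intros) auto
      ultimately show "continuous_on {1..R} (\<lambda>r. \<bar>f r\<bar> powr p / \<bar>r\<bar> powr p * r powr (d-1))"
        using cfp by (intro continuous_on_mult continuous_on_divide) auto
      show "\<forall>x>R. \<bar>f x\<bar> powr p / \<bar>x\<bar> powr p * x powr (d-1) = 0" using fz by simp
    qed
    also have "\<dots> = integral {1..R} (\<lambda>r. \<bar>f r\<bar> powr p * r powr (d-p-1))"
    proof (rule integral_cong)
      fix r assume r: "r \<in> {1..R}"
      then have "r powr (d-p-1) = r powr (d-1) / r powr p" by (simp add: powr_diff[symmetric] algebra_simps)
      then show "\<bar>f r\<bar> powr p / \<bar>r\<bar> powr p * r powr (d-1) = \<bar>f r\<bar> powr p * r powr (d-p-1)"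
        using r by simp
    qed
    finally have L': "(LINT r:{1..}|lborel. \<bar>f r\<bar> powr p / \<bar>r\<bar> powr p * r powr (d-1))
        = integral {1..R} (\<lambda>r. \<bar>f r\<bar> powr p * r powr (d-p-1))" .
    have Rr: "(LINT r:{1..}|lborel. \<bar>D1 r\<bar> powr p * r powr (d-1))
        = integral {1..R} (\<lambda>r. \<bar>D1 r\<bar> powr p * r powr (d-1))"
    proof (rule lint_to_integral[OF R1])
      have "continuous_on {1..R} (\<lambda>r::real. r powr (d-1))" by (intro continuous_intros) auto
      then show "continuous_on {1..R} (\<lambda>r. \<bar>D1 r\<bar> powr p * r powr (d-1))"
        using cDp by (intro continuous_on_mult) auto
      show "\<forall>x>R. \<bar>D1 x\<bar> powr p * x powr (d-1) = 0" using Dz by simp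
    qed
    show "(LINT r:{1..}|lborel. \<bar>f r\<bar> powr p / \<bar>r\<bar> powr p * r powr (d-1))
       \<le> K * (LINT r:{1..}|lborel. \<bar>D1 r\<bar> powr p * r powr (d-1))"
      unfolding L' Rr by (rule main)
  qed
qed


lemma nb_right: "(x::real) \<ge> 1 \<Longrightarrow> at x within {1..} \<noteq> bot"
proof
  assume x: "x \<ge> 1" and b: "at x within {1..} = bot"
  have "at_right x \<le> at x within {1..}" using x by (intro at_le) auto
  then have "at_right x = bot" using b by (simp add: bot_unique)
  then show False using trivial_limit_at_right_real[of x] by simp
qed

lemma nb_left: "(x::real) \<le> -1 \<Longrightarrow> at x within {..-1} \<noteq> bot"
proof
  assume x: "x \<le> -1" and b: "at x within {..-1} = bot"
  have "at_left x \<le> at x within {..-1}" using x by (intro at_le) auto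
  then have "at_left x = bot" using b by (simp add: bot_unique)
  then show False using trivial_limit_at_left_real[of x] by simp
qed

theorem lemma3p1:
  fixes d1 d2 p :: real
  assumes "1 < d1" and "d1 < d2"
    and "1 \<le> p" and "p < min d1 d2"
  shows "\<exists>C>0. \<forall>f\<in>S0_tilde.
           tint d1 d2 (\<lambda>x. \<bar>f x\<bar> powr p / \<bar>x\<bar> powr p)
             \<le> C * tint d1 d2 (\<lambda>x. \<bar>tderiv f x\<bar> powr p)"
proof -
  have pd1: "p < d1" and pd2: "p < d2" using assms by auto
  obtain C1 where C1: "C1 > 0" and H1: "\<forall>(f::real\<Rightarrow>real) (D1::real\<Rightarrow>real) (R::real). 1 \<le> R \<and>
     (\<forall>x\<ge>1. (f has_real_derivative D1 x) (at x within {1..})) \<and> continuous_on {1..} D1 \<and>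
     (\<forall>x\<ge>R. f x = 0) \<and> (\<forall>x>R. D1 x = 0) \<longrightarrow>
     (LINT r:{1..}|lborel. \<bar>f r\<bar> powr p / \<bar>r\<bar> powr p * r powr (d1-1))
       \<le> C1 * (LINT r:{1..}|lborel. \<bar>D1 r\<bar> powr p * r powr (d1-1))"
    using halfline[OF pd1 assms(3)] by blast
  obtain C2 where C2: "C2 > 0" and H2: "\<forall>(f::real\<Rightarrow>real) (D1::real\<Rightarrow>real) (R::real). 1 \<le> R \<and>
     (\<forall>x\<ge>1. (f has_real_derivative D1 x) (at x within {1..})) \<and> continuous_on {1..} D1 \<and>
     (\<forall>x\<ge>R. f x = 0) \<and> (\<forall>x>R. D1 x = 0) \<longrightarrow>
     (LINT r:{1..}|lborel. \<bar>f r\<bar> powr p / \<bar>r\<bar> powr p * r powr (d2-1))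
       \<le> C2 * (LINT r:{1..}|lborel. \<bar>D1 r\<bar> powr p * r powr (d2-1))"
    using halfline[OF pd2 assms(3)] by blast
  show ?thesis
  proof (intro exI[of _ "max C1 C2"] conjI ballI)
    show "0 < max C1 C2" using C1 by simp
    fix f assume "f \<in> S0_tilde"
    then obtain DL DR R0 where DL: "deriv_family_on {..-1} DL f" and DR: "deriv_family_on {1..} DR f"
      and R0: "\<forall>x. \<bar>x\<bar> \<ge> R0 \<longrightarrow> f x = 0"
      unfolding S0_tilde_def smooth_on_def by blast
    define R where "R = max R0 1"
    have R1: "1 \<le> R" by (simp add: R_def)
    have fz: "f x = 0" if "\<bar>x\<bar> \<ge> R" for x using R0 that by (auto simp: R_def)
    have fzp: "f x = 0" if "x \<ge> R" for x using fz[of x] that R1 by simp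
    have fzn: "f x = 0" if "x \<le> -R" for x using fz[of x] that R1 by simp
    have DR0: "\<And>x. x \<in> {1..} \<Longrightarrow> DR 0 x = f x"
      and DRd: "\<And>n x. x \<in> {1..} \<Longrightarrow> (DR n has_real_derivative DR (Suc n) x) (at x within {1..})"
      using DR unfolding deriv_family_on_def by auto
    have DL0: "\<And>x. x \<in> {..-1} \<Longrightarrow> DL 0 x = f x"
      and DLd: "\<And>n x. x \<in> {..-1} \<Longrightarrow> (DL n has_real_derivative DL (Suc n) x) (at x within {..-1})"
      using DL unfolding deriv_family_on_def by auto
    have fdR: "(f has_real_derivative DR 1 x) (at x within {1..})" if x: "x \<ge> 1" for x
      using has_field_derivative_transform_within[OF DRd[of x 0] zero_less_one] x DR0 by auto
    have tdR: "tderiv f x = DR 1 x" if x: "x \<ge> 1" for x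
    proof -
      have "(THE y. (f has_real_derivative y) (at x within {1..})) = DR 1 x"
        using fdR[OF x] has_field_derivative_unique[OF _ _ nb_right[OF x]] by (intro the_equality) auto
      then show ?thesis using x unfolding tderiv_def by simp
    qed
    have DzR: "DR 1 x = 0" if x: "x > R" for x
    proof -
      have h0: "((\<lambda>_. 0) has_real_derivative 0) (at x within {1..})" by simp
      have "(f has_real_derivative 0) (at x within {1..})"
        by (rule has_field_derivative_transform_within[where d="x-R", OF h0])
          (use x R1 in \<open>auto simp: dist_real_def abs_less_iff intro!: fzp fzp[symmetric]\<close>)
      then show ?thesis using fdR[of x] x R1 has_field_derivative_unique[OF _ _ nb_right] by force
    qed
    have DcR: "continuous_on {1..} (DR 1)"
      by (rule DERIV_continuous_on[where D="DR 2"]) (use DRd[of _ 1] in \<open>auto simp: numeral_2_eq_2\<close>)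
    have right: "(LINT r:{1..}|lborel. \<bar>f r\<bar> powr p / \<bar>r\<bar> powr p * r powr (d2-1))
       \<le> C2 * (LINT r:{1..}|lborel. \<bar>DR 1 r\<bar> powr p * r powr (d2-1))"
      using H2[rule_format, of R f "DR 1"] R1 fdR DcR DzR fzp by auto
    have fdL: "(f has_real_derivative DL 1 x) (at x within {..-1})" if x: "x \<le> -1" for x
      using has_field_derivative_transform_within[OF DLd[of x 0] zero_less_one] x DL0 by auto
    have tdL: "tderiv f x = DL 1 x" if x: "x \<le> -1" for x
    proof -
      have "(THE y. (f has_real_derivative y) (at x within {..-1})) = DL 1 x"
        using fdL[OF x] has_field_derivative_unique[OF _ _ nb_left[OF x]] by (intro the_equality) auto
      then show ?thesis using x unfolding tderiv_def by simp
    qed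
    have DzL: "DL 1 x = 0" if x: "x < -R" for x
    proof -
      have h0: "((\<lambda>_. 0) has_real_derivative 0) (at x within {..-1})" by simp
      have "(f has_real_derivative 0) (at x within {..-1})"
        by (rule has_field_derivative_transform_within[where d="-R-x", OF h0])
          (use x R1 in \<open>auto simp: dist_real_def abs_less_iff intro!: fzn fzn[symmetric]\<close>)
      then show ?thesis using fdL[of x] x R1 has_field_derivative_unique[OF _ _ nb_left] by force
    qed
    have DcL: "continuous_on {..-1} (DL 1)"
      by (rule DERIV_continuous_on[where D="DL 2"]) (use DLd[of _ 1] in \<open>auto simp: numeral_2_eq_2\<close>)
    define f2 where "f2 = (\<lambda>x. f (-x))"
    define D2 where "D2 = (\<lambda>x. - DL 1 (-x))"
    have fd2: "(f2 has_real_derivative D2 x) (at x within {1..})" if x: "x \<ge> 1" for x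
    proof -
      have a: "(f has_real_derivative DL 1 (-x)) (at (uminus x) within (uminus ` {1..}))"
        using fdL[of "-x"] x by simp
      have b: "(uminus has_real_derivative -1) (at x within {1..})"
        by (auto intro!: derivative_eq_intros)
      show ?thesis using DERIV_image_chain[OF a b] unfolding f2_def D2_def by (simp add: o_def)
    qed
    have Dc2: "continuous_on {1..} D2"
    proof -
      have "continuous_on {1..} (\<lambda>x. DL 1 (- x))"
        by (rule continuous_on_compose2[OF DcL]) (auto intro!: continuous_intros)
      then show ?thesis unfolding D2_def by (intro continuous_intros)
    qed
    have Dz2: "D2 x = 0" if "x > R" for x using DzL[of "-x"] that unfolding D2_def by simp
    have fz2: "f2 x = 0" if "x \<ge> R" for x using fzn[of "-x"] that unfolding f2_def by simp
    have left: "(LINT r:{1..}|lborel. \<bar>f2 r\<bar> powr p / \<bar>r\<bar> powr p * r powr (d1-1))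
       \<le> C1 * (LINT r:{1..}|lborel. \<bar>D2 r\<bar> powr p * r powr (d1-1))"
      using H1[rule_format, of R f2 D2] R1 fd2 Dc2 Dz2 fz2 by auto
    have set_eq: "{x::real. - x \<in> {..-1}} = {1..}" by auto
    have L1: "(LINT r:{..-1}|lborel. \<bar>f r\<bar> powr p / \<bar>r\<bar> powr p * \<bar>r\<bar> powr (d1 - 1))
        = (LINT r:{1..}|lborel. \<bar>f2 r\<bar> powr p / \<bar>r\<bar> powr p * r powr (d1-1))"
      unfolding set_integral_reflect[where S="{..-1}"] set_eq
      by (rule set_lebesgue_integral_cong) (auto simp: f2_def)
    have J1: "(LINT r:{..-1}|lborel. \<bar>tderiv f r\<bar> powr p * \<bar>r\<bar> powr (d1 - 1))
        = (LINT r:{1..}|lborel. \<bar>D2 r\<bar> powr p * r powr (d1-1))"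
      unfolding set_integral_reflect[where S="{..-1}"] set_eq
      by (rule set_lebesgue_integral_cong) (auto simp: D2_def tdL)
    have J2: "(LINT r:{1..}|lborel. \<bar>tderiv f r\<bar> powr p * r powr (d2 - 1))
        = (LINT r:{1..}|lborel. \<bar>DR 1 r\<bar> powr p * r powr (d2-1))"
      by (rule set_lebesgue_integral_cong) (auto simp: tdR)
    have nn1: "0 \<le> (LINT r:{1..}|lborel. \<bar>D2 r\<bar> powr p * r powr (d1-1))"
      unfolding set_lebesgue_integral_def by (rule Bochner_Integration.integral_nonneg) (auto simp: indicator_def)
    have nn2: "0 \<le> (LINT r:{1..}|lborel. \<bar>DR 1 r\<bar> powr p * r powr (d2-1))"
      unfolding set_lebesgue_integral_def by (rule Bochner_Integration.integral_nonneg) (auto simp: indicator_def)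
    have m1: "C1 * (LINT r:{1..}|lborel. \<bar>D2 r\<bar> powr p * r powr (d1-1))
        \<le> max C1 C2 * (LINT r:{1..}|lborel. \<bar>D2 r\<bar> powr p * r powr (d1-1))"
      by (rule mult_right_mono[OF _ nn1]) simp
    have m2: "C2 * (LINT r:{1..}|lborel. \<bar>DR 1 r\<bar> powr p * r powr (d2-1))
        \<le> max C1 C2 * (LINT r:{1..}|lborel. \<bar>DR 1 r\<bar> powr p * r powr (d2-1))"
      by (rule mult_right_mono[OF _ nn2]) simp
    show "tint d1 d2 (\<lambda>x. \<bar>f x\<bar> powr p / \<bar>x\<bar> powr p)
             \<le> max C1 C2 * tint d1 d2 (\<lambda>x. \<bar>tderiv f x\<bar> powr p)"
      unfolding tint_def L1 J1 J2 using left right m1 m2 by (simp add: distrib_left)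
  qed
qed

end
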